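(* For every NBA $\mathcal A$, the relation $S(\sqsupseteq^{\mathrm{fx\text{-}de}},\sqsubseteq^{\mathrm{fx\text{-}de}})$ is good for saturation, i.e. $\mathcal L(\mathrm{Sat}(\mathcal A,S(\sqsupseteq^{\mathrm{fx\text{-}de}},\sqsubseteq^{\mathrm{fx\text{-}de}})))=\mathcal L(\mathcal A)$.
   Context: An NBA $\mathcal A=(\Sigma,Q,I,F,\delta)$, $\delta\subseteq Q\times\Sigma\times Q$, forward and backward complete; initial traces start in $I$, fair traces are infinite and visit $F$ infinitely often; the language is the set of infinite words with an initial fair trace. Delayed fixed-word simulation: for $w=\sigma_0\sigma_1\cdots\in\Sigma^\omega$, in the game $G_w$ from $(p_0,q_0)$, at round $i$ from $(p_i,q_i)$ Spoiler picks a transition $p_i\xrightarrow{\sigma_i}p_{i+1}$ and Duplicator answers $q_i\xrightarrow{\sigma_i}q_{i+1}$ (Spoiler is forced to read $w$, and Duplicator's strategy may depend on $w$); Duplicator wins the play if for every $i$ with $p_i\in F$ there is $j\ge i$ with $q_j\in F$. Then $p\sqsubseteq^{\mathrm{fx\text{-}de}}q$ iff for every $w\in\Sigma^\omega$ Duplicator has a winning strategy in $G_w$ from $(p,q)$; $\sqsupseteq$ is the inverse. Let $\Delta=Q\times\Sigma\times Q$. For $R_b,R_f\subseteq Q\times Q$, $S(R_b,R_f)=\{((p,\sigma,r),(p',\sigma,r'))\in\Delta\times\Delta:p\,R_b\,p',\ r\,R_f\,r'\}$. For a reflexive $S\subseteq\Delta\times\Delta$, the saturated automaton $\mathrm{Sat}(\mathcal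 A,S)=(\Sigma,Q,I,F,\delta')$ with $\delta'=\{t'\in\Delta:\exists t\in\delta,\ (t',t)\in S\}$. $S$ is good for saturation if $\mathrm{Sat}(\mathcal A,S)$ has the same language as $\mathcal A$. *)

theory Defs
  imports Main
begin

record ('s, 'q) nba =
  alphabet  :: "'s set"
  states    :: "'q set"
  initial   :: "'q set"
  accepting :: "'q set"
  trans     :: "('q \<times> 's \<times> 'q) set"

definition wf_complete_nba :: "('s, 'q) nba \<Rightarrow> bool" where
  "wf_complete_nba A \<longleftrightarrow>
     finite (alphabet A) \<and> finite (states A) \<and>
     initial A \<subseteq> states A \<and> accepting A \<subseteq> states A \<and>
     trans A \<subseteq> states A \<times> alphabet A \<times> states A \<and>
     (\<forall>p \<in> states A. \<forall>a \<in> alphabet A. \<exists>r. (p, a, r) \<in> trans A) \<and>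
     (\<forall>r \<in> states A. \<forall>a \<in> alphabet A. \<exists>p. (p, a, r) \<in> trans A)"

definition omega_words :: "('s, 'q) nba \<Rightarrow> (nat \<Rightarrow> 's) set" where
  "omega_words A = {w. \<forall>i. w i \<in> alphabet A}"

definition is_trace :: "('s, 'q) nba \<Rightarrow> (nat \<Rightarrow> 's) \<Rightarrow> (nat \<Rightarrow> 'q) \<Rightarrow> bool" where
  "is_trace A w \<rho> \<longleftrightarrow> (\<forall>i. (\<rho> i, w i, \<rho> (Suc i)) \<in> trans A)"

definition language :: "('s, 'q) nba \<Rightarrow> (nat \<Rightarrow> 's) set" where
  "language A = {w \<in> omega_words A. \<exists>\<rho>. is_trace A w \<rho> \<and> \<rho> 0 \<in> initial A \<and>
                   (\<exists>\<^sub>\<infinity> i. \<rho> i \<in> accepting A)}"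

text \<open>Duplicator strategies in the fixed-word game G_w: a map from Spoiler's play
  (p_0 p_1 ...) to Duplicator's play (q_0 q_1 ...), where q_i depends only on p_0..p_i.\<close>
definition causal :: "((nat \<Rightarrow> 'q) \<Rightarrow> (nat \<Rightarrow> 'q)) \<Rightarrow> bool" where
  "causal d \<longleftrightarrow> (\<forall>\<rho> \<rho>' i. (\<forall>j\<le>i. \<rho> j = \<rho>' j) \<longrightarrow> d \<rho> i = d \<rho>' i)"

definition dup_wins_de :: "('s, 'q) nba \<Rightarrow> (nat \<Rightarrow> 's) \<Rightarrow> 'q \<Rightarrow> 'q \<Rightarrow> bool" where
  "dup_wins_de A w p q \<longleftrightarrow>
     (\<exists>d. causal d \<and>
       (\<forall>\<rho>. \<rho> 0 = p \<and> is_trace A w \<rho> \<longrightarrow>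
          d \<rho> 0 = q \<and> is_trace A w (d \<rho>) \<and>
          (\<forall>i. \<rho> i \<in> accepting A \<longrightarrow> (\<exists>j\<ge>i. d \<rho> j \<in> accepting A))))"

definition fx_de_sim :: "('s, 'q) nba \<Rightarrow> ('q \<times> 'q) set" where
  "fx_de_sim A = {(p, q). p \<in> states A \<and> q \<in> states A \<and>
                    (\<forall>w \<in> omega_words A. dup_wins_de A w p q)}"

definition S_rel :: "('q \<times> 'q) set \<Rightarrow> ('q \<times> 'q) set \<Rightarrow>
    (('q \<times> 's \<times> 'q) \<times> ('q \<times> 's \<times> 'q)) set" where
  "S_rel Rb Rf = {((p, a, r), (p', a', r')). a = a' \<and> (p, p') \<in> Rb \<and> (r, r') \<in> Rf}"

definition Sat :: "('s, 'q) nba \<Rightarrow> (('q \<times> 's \<times> 'q) \<times> ('q \<times> 's \<times> 'q)) set \<Rightarrow> ('s, 'q) nba" where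
  "Sat A S = A\<lparr>trans := {t' \<in> states A \<times> alphabet A \<times> states A. \<exists>t \<in> trans A. (t', t) \<in> S}\<rparr>"

definition good_for_saturation :: "('s, 'q) nba \<Rightarrow> (('q \<times> 's \<times> 'q) \<times> ('q \<times> 's \<times> 'q)) set \<Rightarrow> bool" where
  "good_for_saturation A S \<longleftrightarrow> language (Sat A S) = language A"

end

theory Submission
  imports Defs "HOL-Library.Infinite_Set"
begin

definition win :: "('s, 'q) nba \<Rightarrow> (nat \<Rightarrow> 's) \<Rightarrow> nat option \<Rightarrow> 'q \<Rightarrow> 'q \<Rightarrow> bool" where
  "win A v ob p q \<longleftrightarrow> (\<exists>d. causal d \<and>
     (\<forall>\<rho>. \<rho> 0 = p \<and> is_trace A v \<rho> \<longrightarrow>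
        d \<rho> 0 = q \<and> is_trace A v (d \<rho>) \<and>
        (\<forall>i. \<rho> i \<in> accepting A \<longrightarrow> (\<exists>j\<ge>i. d \<rho> j \<in> accepting A)) \<and>
        (\<forall>n. ob = Some n \<longrightarrow> (\<exists>j\<le>n. d \<rho> j \<in> accepting A))))"

lemma fx_win: "(p, q) \<in> fx_de_sim A \<Longrightarrow> v \<in> omega_words A \<Longrightarrow> win A v None p q"
  unfolding fx_de_sim_def dup_wins_de_def win_def by simp

lemma win_refl: "win A v None p p"
  unfolding win_def
  by (rule exI[of _ id]) (auto simp: causal_def)

lemma fx_refl: "p \<in> states A \<Longrightarrow> (p, p) \<in> fx_de_sim A"
  unfolding fx_de_sim_def dup_wins_de_def
  by (auto intro!: exI[of _ id] simp: causal_def)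

lemma trace_exists:
  assumes wf: "wf_complete_nba A" and s: "s \<in> states A" and al: "\<forall>i. v i \<in> alphabet A"
  shows "\<exists>\<rho>. \<rho> 0 = s \<and> is_trace A v \<rho>"
proof -
  define nxt where "nxt i x = (SOME y. (x, v i, y) \<in> trans A)" for i x
  define \<rho> where "\<rho> = rec_nat s (\<lambda>i x. nxt i x)"
  have r0: "\<rho> 0 = s" and rS: "\<rho> (Suc i) = nxt i (\<rho> i)" for i by (simp_all add: \<rho>_def)
  have key: "\<rho> i \<in> states A \<and> (\<rho> i, v i, \<rho> (Suc i)) \<in> trans A" for i
  proof (induction i)
    case 0
    have "\<exists>y. (\<rho> 0, v 0, y) \<in> trans A" using wf s al r0 unfolding wf_complete_nba_def by auto
    then show ?case using s r0 rS[of 0] unfolding nxt_def by (auto intro: someI_ex)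
  next
    case (Suc i)
    have st: "\<rho> (Suc i) \<in> states A" using Suc wf unfolding wf_complete_nba_def by auto
    have "\<exists>y. (\<rho> (Suc i), v (Suc i), y) \<in> trans A" using wf st al unfolding wf_complete_nba_def by auto
    then show ?case using st rS[of "Suc i"] unfolding nxt_def by (auto intro: someI_ex)
  qed
  then show ?thesis using r0 unfolding is_trace_def by auto
qed

definition cns :: "'q \<Rightarrow> (nat \<Rightarrow> 'q) \<Rightarrow> nat \<Rightarrow> 'q" where
  "cns p \<tau> = (\<lambda>k. case k of 0 \<Rightarrow> p | Suc m \<Rightarrow> \<tau> m)"

lemma cns_simps[simp]: "cns p \<tau> 0 = p" "cns p \<tau> (Suc m) = \<tau> m"
  by (simp_all add: cns_def)

lemma trace_cns: "is_trace A v (cns p \<tau>) \<longleftrightarrow>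
   (p, v 0, \<tau> 0) \<in> trans A \<and> is_trace A (\<lambda>k. v (Suc k)) \<tau>"
  unfolding is_trace_def
proof safe
  fix i assume "\<forall>i. (cns p \<tau> i, v i, cns p \<tau> (Suc i)) \<in> trans A"
  from this[rule_format, of 0] this[rule_format, of "Suc i"]
  show "(p, v 0, \<tau> 0) \<in> trans A" "(\<tau> i, v (Suc i), \<tau> (Suc i)) \<in> trans A" by auto
next
  fix i assume "(p, v 0, \<tau> 0) \<in> trans A" "\<forall>i. (\<tau> i, v (Suc i), \<tau> (Suc i)) \<in> trans A"
  then show "(cns p \<tau> i, v i, cns p \<tau> (Suc i)) \<in> trans A" by (cases i) auto
qed

lemma win_comp:
  assumes "win A v o1 x y" "win A v o2 y z"
  shows "win A v o2 x z"
proof -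
  obtain d1 where c1: "causal d1" and D1: "\<forall>\<rho>. \<rho> 0 = x \<and> is_trace A v \<rho> \<longrightarrow>
        d1 \<rho> 0 = y \<and> is_trace A v (d1 \<rho>) \<and>
        (\<forall>i. \<rho> i \<in> accepting A \<longrightarrow> (\<exists>j\<ge>i. d1 \<rho> j \<in> accepting A))"
    using assms(1) unfolding win_def by blast
  obtain d2 where c2: "causal d2" and D2: "\<forall>\<rho>. \<rho> 0 = y \<and> is_trace A v \<rho> \<longrightarrow>
        d2 \<rho> 0 = z \<and> is_trace A v (d2 \<rho>) \<and>
        (\<forall>i. \<rho> i \<in> accepting A \<longrightarrow> (\<exists>j\<ge>i. d2 \<rho> j \<in> accepting A)) \<and>
        (\<forall>n. o2 = Some n \<longrightarrow> (\<exists>j\<le>n. d2 \<rho> j \<in> accepting A))"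
    using assms(2) unfolding win_def by blast
  have "causal (d2 \<circ> d1)"
    unfolding causal_def
  proof (intro allI impI)
    fix \<rho> \<rho>' :: "nat \<Rightarrow> 'b" and i
    assume ag: "\<forall>j\<le>i. \<rho> j = \<rho>' j"
    have "\<forall>j\<le>i. d1 \<rho> j = d1 \<rho>' j"
    proof (intro allI impI)
      fix j assume "j \<le> i"
      then have "\<forall>k\<le>j. \<rho> k = \<rho>' k" using ag by auto
      then show "d1 \<rho> j = d1 \<rho>' j" using c1 unfolding causal_def by blast
    qed
    then show "(d2 \<circ> d1) \<rho> i = (d2 \<circ> d1) \<rho>' i" using c2 unfolding causal_def by simp
  qed
  moreover have "\<forall>\<rho>. \<rho> 0 = x \<and> is_trace A v \<rho> \<longrightarrow>
        (d2 \<circ> d1) \<rho> 0 = z \<and> is_trace A v ((d2 \<circ> d1) \<rho>) \<and>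
        (\<forall>i. \<rho> i \<in> accepting A \<longrightarrow> (\<exists>j\<ge>i. (d2 \<circ> d1) \<rho> j \<in> accepting A)) \<and>
        (\<forall>n. o2 = Some n \<longrightarrow> (\<exists>j\<le>n. (d2 \<circ> d1) \<rho> j \<in> accepting A))"
  proof (intro allI impI)
    fix \<rho> assume r: "\<rho> 0 = x \<and> is_trace A v \<rho>"
    have a: "d1 \<rho> 0 = y \<and> is_trace A v (d1 \<rho>) \<and>
        (\<forall>i. \<rho> i \<in> accepting A \<longrightarrow> (\<exists>j\<ge>i. d1 \<rho> j \<in> accepting A))" using D1 r by blast
    then have b: "d2 (d1 \<rho>) 0 = z \<and> is_trace A v (d2 (d1 \<rho>)) \<and>
        (\<forall>i. d1 \<rho> i \<in> accepting A \<longrightarrow> (\<exists>j\<ge>i. d2 (d1 \<rho>) j \<in> accepting A)) \<and>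
        (\<forall>n. o2 = Some n \<longrightarrow> (\<exists>j\<le>n. d2 (d1 \<rho>) j \<in> accepting A))" using D2 by blast
    have "\<forall>i. \<rho> i \<in> accepting A \<longrightarrow> (\<exists>j\<ge>i. d2 (d1 \<rho>) j \<in> accepting A)"
    proof (intro allI impI)
      fix i assume "\<rho> i \<in> accepting A"
      then obtain j where "j \<ge> i" "d1 \<rho> j \<in> accepting A" using a by blast
      then obtain k where "k \<ge> j" "d2 (d1 \<rho>) k \<in> accepting A" using b by blast
      then show "\<exists>j\<ge>i. d2 (d1 \<rho>) j \<in> accepting A" using \<open>j \<ge> i\<close> order_trans by blast
    qed
    then show "(d2 \<circ> d1) \<rho> 0 = z \<and> is_trace A v ((d2 \<circ> d1) \<rho>) \<and>
        (\<forall>i. \<rho> i \<in> accepting A \<longrightarrow> (\<exists>j\<ge>i. (d2 \<circ> d1) \<rho> j \<in> accepting A)) \<and>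
        (\<forall>n. o2 = Some n \<longrightarrow> (\<exists>j\<le>n. (d2 \<circ> d1) \<rho> j \<in> accepting A))"
      using b by simp
  qed
  ultimately show ?thesis unfolding win_def by blast
qed

lemma win_step:
  assumes W: "win A v ob p q" and T: "(p, v 0, p') \<in> trans A" and wf: "wf_complete_nba A"
    and al: "\<forall>i. v i \<in> alphabet A"
  shows "\<exists>q'. (q, v 0, q') \<in> trans A \<and>
     win A (\<lambda>k. v (Suc k)) (if q \<in> accepting A then None else map_option (\<lambda>n. n - 1) ob) p' q' \<and>
     (\<forall>n. q \<notin> accepting A \<longrightarrow> ob = Some n \<longrightarrow> 0 < n)"
proof -
  obtain d where cd: "causal d" and D: "\<forall>\<rho>. \<rho> 0 = p \<and> is_trace A v \<rho> \<longrightarrow>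
        d \<rho> 0 = q \<and> is_trace A v (d \<rho>) \<and>
        (\<forall>i. \<rho> i \<in> accepting A \<longrightarrow> (\<exists>j\<ge>i. d \<rho> j \<in> accepting A)) \<and>
        (\<forall>n. ob = Some n \<longrightarrow> (\<exists>j\<le>n. d \<rho> j \<in> accepting A))"
    using W unfolding win_def by blast
  have p'S: "p' \<in> states A" using wf T unfolding wf_complete_nba_def by auto
  obtain \<tau>0 where t0: "\<tau>0 0 = p'" "is_trace A (\<lambda>k. v (Suc k)) \<tau>0"
    using trace_exists[OF wf p'S, of "\<lambda>k. v (Suc k)"] al by auto
  define \<rho>0 where "\<rho>0 = cns p \<tau>0"
  have r0: "\<rho>0 0 = p \<and> is_trace A v \<rho>0" using t0 T unfolding \<rho>0_def trace_cns by simp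
  note D0 = D[rule_format, OF r0]
  define q' where "q' = d \<rho>0 1"
  have qq': "(q, v 0, q') \<in> trans A"
    using D0 unfolding is_trace_def q'_def by (metis One_nat_def)
  have pos: "\<forall>n. q \<notin> accepting A \<longrightarrow> ob = Some n \<longrightarrow> 0 < n"
  proof (intro allI impI)
    fix n assume "q \<notin> accepting A" "ob = Some n"
    then obtain j where "j \<le> n" "d \<rho>0 j \<in> accepting A" using D0 by blast
    then show "0 < n" using D0 \<open>q \<notin> accepting A\<close> by (cases j) auto
  qed
  define d' where "d' = (\<lambda>\<tau> k. d (cns p \<tau>) (Suc k))"
  have cd': "causal d'"
    unfolding causal_def d'_def
  proof (intro allI impI)
    fix \<tau> \<tau>' :: "nat \<Rightarrow> 'b" and i
    assume "\<forall>j\<le>i. \<tau> j = \<tau>' j"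
    then have "\<forall>j\<le>Suc i. cns p \<tau> j = cns p \<tau>' j"
      by (metis cns_simps Suc_le_mono not0_implies_Suc)
    then show "d (cns p \<tau>) (Suc i) = d (cns p \<tau>') (Suc i)" using cd unfolding causal_def by blast
  qed
  let ?ob = "(if q \<in> accepting A then None else map_option (\<lambda>n. n - 1) ob)"
  have "\<forall>\<tau>. \<tau> 0 = p' \<and> is_trace A (\<lambda>k. v (Suc k)) \<tau> \<longrightarrow>
        d' \<tau> 0 = q' \<and> is_trace A (\<lambda>k. v (Suc k)) (d' \<tau>) \<and>
        (\<forall>i. \<tau> i \<in> accepting A \<longrightarrow> (\<exists>j\<ge>i. d' \<tau> j \<in> accepting A)) \<and>
        (\<forall>n. ?ob = Some n \<longrightarrow> (\<exists>j\<le>n. d' \<tau> j \<in> accepting A))"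
  proof (intro allI impI)
    fix \<tau> assume t: "\<tau> 0 = p' \<and> is_trace A (\<lambda>k. v (Suc k)) \<tau>"
    have rr: "cns p \<tau> 0 = p \<and> is_trace A v (cns p \<tau>)" using t T unfolding trace_cns by simp
    note Dr = D[rule_format, OF rr]
    have "\<forall>j\<le>1. cns p \<tau> j = \<rho>0 j" unfolding \<rho>0_def using t t0
      by (metis One_nat_def cns_simps le_Suc_eq le_zero_eq)
    then have e1: "d' \<tau> 0 = q'" using cd unfolding causal_def d'_def q'_def by (metis One_nat_def)
    have e2: "is_trace A (\<lambda>k. v (Suc k)) (d' \<tau>)" using Dr unfolding is_trace_def d'_def by simp
    have e3: "\<forall>i. \<tau> i \<in> accepting A \<longrightarrow> (\<exists>j\<ge>i. d' \<tau> j \<in> accepting A)"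
    proof (intro allI impI)
      fix i assume "\<tau> i \<in> accepting A"
      then have "cns p \<tau> (Suc i) \<in> accepting A" by simp
      then obtain j where "j \<ge> Suc i" "d (cns p \<tau>) j \<in> accepting A" using Dr by blast
      then show "\<exists>j\<ge>i. d' \<tau> j \<in> accepting A" unfolding d'_def
        by (metis Suc_le_D Suc_le_mono)
    qed
    have e4: "\<forall>n. ?ob = Some n \<longrightarrow> (\<exists>j\<le>n. d' \<tau> j \<in> accepting A)"
    proof (intro allI impI)
      fix n assume h: "?ob = Some n"
      then have qn: "q \<notin> accepting A" by (auto split: if_splits)
      with h obtain m where m: "ob = Some m" "n = m - 1" by (auto split: if_splits)
      then obtain j where "j \<le> m" "d (cns p \<tau>) j \<in> accepting A" using Dr by blast
      moreover have "j \<noteq> 0" using calculation Dr qn by (cases j) auto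
      ultimately obtain j' where "j = Suc j'" "j' \<le> n" "d (cns p \<tau>) (Suc j') \<in> accepting A"
        using m by (cases j) auto
      then show "\<exists>j\<le>n. d' \<tau> j \<in> accepting A" unfolding d'_def by blast
    qed
    show "d' \<tau> 0 = q' \<and> is_trace A (\<lambda>k. v (Suc k)) (d' \<tau>) \<and>
        (\<forall>i. \<tau> i \<in> accepting A \<longrightarrow> (\<exists>j\<ge>i. d' \<tau> j \<in> accepting A)) \<and>
        (\<forall>n. ?ob = Some n \<longrightarrow> (\<exists>j\<le>n. d' \<tau> j \<in> accepting A))"
      using e1 e2 e3 e4 by blast
  qed
  then have "win A (\<lambda>k. v (Suc k)) ?ob p' q'" unfolding win_def using cd' by blast
  then show ?thesis using qq' pos by blast
qed


lemma finite_bound: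
  assumes "finite S" "\<forall>s\<in>S. \<exists>n::nat. P s n" "\<And>s n m. P s n \<Longrightarrow> n \<le> m \<Longrightarrow> P s m"
  shows "\<exists>N. \<forall>s\<in>S. P s N"
  using assms(1,2)
proof (induction S rule: finite_induct)
  case empty then show ?case by auto
next
  case (insert x F)
  then obtain N where N: "\<forall>s\<in>F. P s N" by auto
  obtain n where n: "P x n" using insert by auto
  have "\<forall>s\<in>insert x F. P s (max N n)"
  proof
    fix s assume "s \<in> insert x F"
    then show "P s (max N n)"
    proof
      assume "s = x" then show ?thesis using n assms(3)[of x n "max N n"] by simp
    next
      assume "s \<in> F" then show ?thesis using N assms(3)[of s N "max N n"] by simp
    qed
  qed
  then show ?case by blast
qed

lemma win_bound:
  assumes wf: "wf_complete_nba A" and W: "win A v None p q" and pF: "p \<in> accepting A"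
  shows "\<exists>n. win A v (Some n) p q"
proof -
  obtain d where cd: "causal d" and D: "\<forall>\<rho>. \<rho> 0 = p \<and> is_trace A v \<rho> \<longrightarrow>
        d \<rho> 0 = q \<and> is_trace A v (d \<rho>) \<and>
        (\<forall>i. \<rho> i \<in> accepting A \<longrightarrow> (\<exists>j\<ge>i. d \<rho> j \<in> accepting A))"
    using W unfolding win_def by blast
  have fin: "finite (states A)" using wf unfolding wf_complete_nba_def by auto
  have tS: "is_trace A v \<rho> \<Longrightarrow> \<rho> (Suc k) \<in> states A" for \<rho> k
  proof -
    have "trans A \<subseteq> states A \<times> alphabet A \<times> states A" using wf by (simp add: wf_complete_nba_def)
    moreover assume "is_trace A v \<rho>"
    then have "(\<rho> k, v k, \<rho> (Suc k)) \<in> trans A" by (simp add: is_trace_def)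
    ultimately show ?thesis by blast
  qed
  have "\<exists>n. \<forall>\<rho>. \<rho> 0 = p \<and> is_trace A v \<rho> \<longrightarrow> (\<exists>j\<le>n. d \<rho> j \<in> accepting A)"
  proof (rule ccontr)
    assume nb: "\<not> ?thesis"
    define bad where "bad k u \<longleftrightarrow> (\<forall>n. \<exists>\<rho>. \<rho> 0 = p \<and> is_trace A v \<rho> \<and> (\<forall>m<k. \<rho> m = u m) \<and>
        (\<forall>j\<le>n. d \<rho> j \<notin> accepting A))" for k u
    have b1: "bad (Suc 0) (\<lambda>_. p)" unfolding bad_def
    proof
      fix n
      obtain \<rho> where "\<rho> 0 = p" "is_trace A v \<rho>" "\<forall>j\<le>n. d \<rho> j \<notin> accepting A"
        using nb by blast
      then show "\<exists>\<rho>. \<rho> 0 = p \<and> is_trace A v \<rho> \<and> (\<forall>m<Suc 0. \<rho> m = p) \<and>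
        (\<forall>j\<le>n. d \<rho> j \<notin> accepting A)" by auto
    qed
    have bstep: "\<exists>s. bad (Suc (Suc k)) (u(Suc k := s))" if bu: "bad (Suc k) u" for k u
    proof (rule ccontr)
      assume nb2: "\<not> (\<exists>s. bad (Suc (Suc k)) (u(Suc k := s)))"
      let ?P = "\<lambda>s n. \<forall>\<rho>. \<rho> 0 = p \<and> is_trace A v \<rho> \<and> (\<forall>m<Suc (Suc k). \<rho> m = (u(Suc k := s)) m)
           \<longrightarrow> (\<exists>j\<le>n. d \<rho> j \<in> accepting A)"
      have ex: "\<forall>s\<in>states A. \<exists>n. ?P s n"
      proof
        fix s
        have "\<not> bad (Suc (Suc k)) (u(Suc k := s))" using nb2 by blast
        then obtain n where n: "\<forall>\<rho>. \<not> (\<rho> 0 = p \<and> is_trace A v \<rho> \<and> (\<forall>m<Suc (Suc k). \<rho> m = (u(Suc k := s)) m) \<and>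
           (\<forall>j\<le>n. d \<rho> j \<notin> accepting A))" unfolding bad_def by blast
        have "?P s n"
        proof (intro allI impI)
          fix \<rho> assume "\<rho> 0 = p \<and> is_trace A v \<rho> \<and> (\<forall>m<Suc (Suc k). \<rho> m = (u(Suc k := s)) m)"
          then have "\<not> (\<forall>j\<le>n. d \<rho> j \<notin> accepting A)" using n by blast
          then show "\<exists>j\<le>n. d \<rho> j \<in> accepting A" by blast
        qed
        then show "\<exists>n. ?P s n" by blast
      qed
      have mono: "?P s m" if "?P s n" "n \<le> m" for s n m
      proof (intro allI impI)
        fix \<rho> assume h: "\<rho> 0 = p \<and> is_trace A v \<rho> \<and> (\<forall>m<Suc (Suc k). \<rho> m = (u(Suc k := s)) m)"
        have "\<exists>j\<le>n. d \<rho> j \<in> accepting A" by (rule mp[OF spec[OF that(1)] h])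
        then obtain j where "j \<le> n" "d \<rho> j \<in> accepting A" by blast
        moreover have "j \<le> m" using \<open>j \<le> n\<close> that(2) by simp
        ultimately show "\<exists>j\<le>m. d \<rho> j \<in> accepting A" by blast
      qed
      have "\<exists>N. \<forall>s\<in>states A. ?P s N"
        by (rule finite_bound[of "states A" ?P, OF fin ex mono])
      then obtain N where N: "\<forall>s\<in>states A. ?P s N" by (rule exE)
      obtain \<rho> where r: "\<rho> 0 = p" "is_trace A v \<rho>" "\<forall>m<Suc k. \<rho> m = u m"
        "\<forall>j\<le>N. d \<rho> j \<notin> accepting A"
        using bu unfolding bad_def by blast
      have "\<rho> (Suc k) \<in> states A" using tS r(2) .
      moreover have "\<forall>m<Suc (Suc k). \<rho> m = (u(Suc k := \<rho> (Suc k))) m"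
        using r(3) by (auto simp: less_Suc_eq)
      ultimately have "\<exists>j\<le>N. d \<rho> j \<in> accepting A" using N r(1,2) by blast
      then show False using r(4) by blast
    qed
    define g where "g k u = (SOME s. bad (Suc (Suc k)) (u(Suc k := s)))" for k u
    have g: "bad (Suc (Suc k)) (u(Suc k := g k u))" if "bad (Suc k) u" for k u
      unfolding g_def using bstep[OF that] by (rule someI_ex)
    define U where "U = rec_nat (\<lambda>_. p) (\<lambda>k u. u(Suc k := g k u))"
    have U0: "U 0 = (\<lambda>_. p)" and US: "U (Suc k) = (U k)(Suc k := g k (U k))" for k
      by (simp_all add: U_def)
    have bU: "bad (Suc k) (U k)" for k
    proof (induction k)
      case 0 show ?case using b1 U0 by simp
    next
      case (Suc k) show ?case unfolding US using g[OF Suc] .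
    qed
    have stab: "m \<le> k \<Longrightarrow> U k m = U m m" for m k
    proof (induction k)
      case 0 then show ?case by simp
    next
      case (Suc k)
      then show ?case by (cases "m = Suc k") (auto simp: US)
    qed
    define \<sigma> where "\<sigma> m = U m m" for m
    have wit: "\<exists>\<rho>. \<rho> 0 = p \<and> is_trace A v \<rho> \<and> (\<forall>m\<le>k. \<rho> m = \<sigma> m) \<and> (\<forall>j\<le>n. d \<rho> j \<notin> accepting A)"
      for k n
    proof -
      obtain \<rho> where "\<rho> 0 = p" "is_trace A v \<rho>" "\<forall>m<Suc k. \<rho> m = U k m"
        "\<forall>j\<le>n. d \<rho> j \<notin> accepting A" using bU[of k] unfolding bad_def by blast
      moreover have "\<forall>m\<le>k. \<rho> m = \<sigma> m"
      proof (intro allI impI)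
        fix m assume "m \<le> k"
        then have "\<rho> m = U k m" using calculation(3) by (simp add: less_Suc_eq_le)
        also have "\<dots> = U m m" using stab[OF \<open>m \<le> k\<close>] .
        finally show "\<rho> m = \<sigma> m" unfolding \<sigma>_def .
      qed
      ultimately show ?thesis by blast
    qed
    have s0: "\<sigma> 0 = p" using U0 unfolding \<sigma>_def by simp
    have st: "is_trace A v \<sigma>"
      unfolding is_trace_def
    proof
      fix i
      obtain \<rho> where "is_trace A v \<rho>" "\<forall>m\<le>Suc i. \<rho> m = \<sigma> m" using wit by blast
      moreover have "\<rho> i = \<sigma> i" "\<rho> (Suc i) = \<sigma> (Suc i)" using \<open>\<forall>m\<le>Suc i. \<rho> m = \<sigma> m\<close> by auto
      ultimately show "(\<sigma> i, v i, \<sigma> (Suc i)) \<in> trans A" unfolding is_trace_def by metis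
    qed
    obtain j where j: "d \<sigma> j \<in> accepting A" using D s0 st pF by blast
    obtain \<rho> where r: "\<forall>m\<le>j. \<rho> m = \<sigma> m" "\<forall>j'\<le>j. d \<rho> j' \<notin> accepting A"
      using wit by blast
    have "d \<rho> j = d \<sigma> j" using r(1) cd unfolding causal_def by blast
    then show False using r(2) j by auto
  qed
  then obtain n where "\<forall>\<rho>. \<rho> 0 = p \<and> is_trace A v \<rho> \<longrightarrow> (\<exists>j\<le>n. d \<rho> j \<in> accepting A)" by blast
  then have "win A v (Some n) p q" unfolding win_def
    apply (intro exI[of _ d])
    using cd D by blast
  then show ?thesis by blast
qed

lemma win_norm:
  assumes wf: "wf_complete_nba A" and W: "win A v ob p q"
  shows "\<exists>ob'. win A v ob' p q \<and> (p \<in> accepting A \<longrightarrow> ob' \<noteq> None) \<and> (ob \<noteq> None \<longrightarrow> ob' = ob)"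
proof (cases "ob = None \<and> p \<in> accepting A")
  case True
  then obtain n where "win A v (Some n) p q" using win_bound[OF wf] W by blast
  then show ?thesis using True by blast
next
  case False
  then show ?thesis using W by blast
qed

lemma sat_simps:
  "states (Sat A SS) = states A" "alphabet (Sat A SS) = alphabet A"
  "initial (Sat A SS) = initial A" "accepting (Sat A SS) = accepting A"
  "trans (Sat A SS) = {t' \<in> states A \<times> alphabet A \<times> states A. \<exists>t \<in> trans A. (t', t) \<in> SS}"
  by (simp_all add: Sat_def)

lemma lang_sat_simps:
  "omega_words (Sat A SS) = omega_words A"
  by (simp add: omega_words_def sat_simps)

theorem theorem10p3:
  fixes A :: "('s, 'q) nba"
  assumes "wf_complete_nba A"
  shows "good_for_saturation A (S_rel ((fx_de_sim A)\<inverse>) (fx_de_sim A))"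
proof -
  note wf = assms
  define SS :: "(('q \<times> 's \<times> 'q) \<times> ('q \<times> 's \<times> 'q)) set" where "SS = S_rel ((fx_de_sim A)\<inverse>) (fx_de_sim A)"
  have transS: "trans A \<subseteq> states A \<times> alphabet A \<times> states A"
    using wf by (simp add: wf_complete_nba_def)
  have sub: "trans A \<subseteq> trans (Sat A SS)"
  proof
    fix t assume t: "t \<in> trans A"
    obtain p a r where tp: "t = (p, a, r)" by (cases t)
    have "p \<in> states A" "r \<in> states A" "a \<in> alphabet A" using t tp transS by auto
    then have "(t, t) \<in> SS" unfolding SS_def S_rel_def tp using fx_refl by auto
    then show "t \<in> trans (Sat A SS)" using t transS by (auto simp: sat_simps)
  qed
  have L1: "language A \<subseteq> language (Sat A SS)"
    unfolding language_def is_trace_def lang_sat_simps using sub by (auto simp: sat_simps)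
  have L2: "language (Sat A SS) \<subseteq> language A"
  proof
    fix w assume "w \<in> language (Sat A SS)"
    then obtain \<rho> where wO: "w \<in> omega_words A" and tr: "is_trace (Sat A SS) w \<rho>"
      and r0: "\<rho> 0 \<in> initial A" and rinf: "\<exists>\<^sub>\<infinity> i. \<rho> i \<in> accepting A"
      unfolding language_def lang_sat_simps by (auto simp: sat_simps)
    have al: "\<forall>i. w i \<in> alphabet A" using wO by (simp add: omega_words_def)
    define sf where "sf i = (\<lambda>k. w (i + k))" for i
    have sfO: "sf i \<in> omega_words A" for i using al by (simp add: omega_words_def sf_def)
    have sfal: "\<forall>k. sf i k \<in> alphabet A" for i using al by (simp add: sf_def)
    have sf0: "sf i 0 = w i" for i by (simp add: sf_def)
    have sfS: "(\<lambda>k. sf i (Suc k)) = sf (Suc i)" for i by (simp add: sf_def)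
    have wit: "\<exists>p' r'. (p', w i, r') \<in> trans A \<and> (p', \<rho> i) \<in> fx_de_sim A \<and> (\<rho> (Suc i), r') \<in> fx_de_sim A"
      for i
    proof -
      have "(\<rho> i, w i, \<rho> (Suc i)) \<in> trans (Sat A SS)" using tr by (simp add: is_trace_def)
      then obtain t where "t \<in> trans A" "((\<rho> i, w i, \<rho> (Suc i)), t) \<in> SS" by (auto simp: sat_simps)
      then show ?thesis unfolding SS_def S_rel_def by auto
    qed
    define Inv where "Inv i q ob \<longleftrightarrow> win A (sf i) ob (\<rho> i) q \<and> (\<rho> i \<in> accepting A \<longrightarrow> ob \<noteq> None)"
      for i q ob
    define Good where "Good i q ob x \<longleftrightarrow> (q, w i, fst x) \<in> trans A \<and> Inv (Suc i) (fst x) (snd x) \<and>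
        (\<forall>n. q \<notin> accepting A \<longrightarrow> ob = Some n \<longrightarrow> 0 < n \<and> snd x = Some (n - 1))" for i q ob x
    have step: "\<exists>x. Good i q ob x" if I: "Inv i q ob" for i q ob
    proof -
      obtain p' r' where pr: "(p', w i, r') \<in> trans A" "(p', \<rho> i) \<in> fx_de_sim A"
        "(\<rho> (Suc i), r') \<in> fx_de_sim A" using wit by blast
      have "win A (sf i) None p' (\<rho> i)" using fx_win[OF pr(2) sfO] .
      moreover have "win A (sf i) ob (\<rho> i) q" using I unfolding Inv_def by blast
      ultimately have W1: "win A (sf i) ob p' q" by (rule win_comp)
      have T: "(p', sf i 0, r') \<in> trans A" using pr(1) sf0 by simp
      obtain q' where q': "(q, sf i 0, q') \<in> trans A"
        "win A (\<lambda>k. sf i (Suc k)) (if q \<in> accepting A then None else map_option (\<lambda>n. n - 1) ob) r' q'"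
        "\<forall>n. q \<notin> accepting A \<longrightarrow> ob = Some n \<longrightarrow> 0 < n"
        using win_step[OF W1 T wf sfal] by blast
      define ob1 where "ob1 = (if q \<in> accepting A then None else map_option (\<lambda>n. n - 1) ob)"
      have W2: "win A (sf (Suc i)) ob1 r' q'" using q'(2) unfolding sfS ob1_def .
      have "win A (sf (Suc i)) None (\<rho> (Suc i)) r'" using fx_win[OF pr(3) sfO] .
      then have W3: "win A (sf (Suc i)) ob1 (\<rho> (Suc i)) q'" using W2 by (rule win_comp)
      obtain ob' where ob': "win A (sf (Suc i)) ob' (\<rho> (Suc i)) q'"
        "\<rho> (Suc i) \<in> accepting A \<longrightarrow> ob' \<noteq> None" "ob1 \<noteq> None \<longrightarrow> ob' = ob1"
        using win_norm[OF wf W3] by blast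
      have "Good i q ob (q', ob')"
        unfolding Good_def Inv_def using ob' q'(1,3) sf0 unfolding ob1_def by auto
      then show ?thesis by blast
    qed
    define f where "f i q ob = (SOME x. Good i q ob x)" for i q ob
    have fG: "Good i q ob (f i q ob)" if "Inv i q ob" for i q ob
      unfolding f_def using step[OF that] by (rule someI_ex)
    obtain ob0 where I0: "Inv 0 (\<rho> 0) ob0"
      using win_norm[OF wf win_refl[of A "sf 0" "\<rho> 0"]] unfolding Inv_def by blast
    define X where "X = rec_nat (\<rho> 0, ob0) (\<lambda>i x. f i (fst x) (snd x))"
    have X0: "X 0 = (\<rho> 0, ob0)" and XS: "X (Suc i) = f i (fst (X i)) (snd (X i))" for i
      by (simp_all add: X_def)
    have XI: "Inv i (fst (X i)) (snd (X i))" for i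
    proof (induction i)
      case 0 then show ?case using I0 X0 by simp
    next
      case (Suc i) then show ?case using fG[OF Suc] unfolding XS Good_def by blast
    qed
    have XG: "Good i (fst (X i)) (snd (X i)) (X (Suc i))" for i
      unfolding XS using fG[OF XI] .
    define \<pi> where "\<pi> i = fst (X i)" for i
    have ptr: "is_trace A w \<pi>" unfolding is_trace_def \<pi>_def using XG unfolding Good_def by blast
    have p0: "\<pi> 0 \<in> initial A" using r0 X0 unfolding \<pi>_def by simp
    have pinf: "\<exists>\<^sub>\<infinity> i. \<pi> i \<in> accepting A"
    proof (rule ccontr)
      assume "\<not> (\<exists>\<^sub>\<infinity> i. \<pi> i \<in> accepting A)"
      then obtain m where m: "\<forall>n>m. \<pi> n \<notin> accepting A" unfolding INFM_nat by blast
      obtain i where i: "i > m" "\<rho> i \<in> accepting A" using rinf unfolding INFM_nat by blast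
      obtain N where N: "snd (X i) = Some N" using XI[of i] i(2) unfolding Inv_def by auto
      have "\<exists>M. snd (X (i + k)) = Some M \<and> M + k \<le> N" for k
      proof (induction k)
        case 0 then show ?case using N by simp
      next
        case (Suc k)
        then obtain M where M: "snd (X (i + k)) = Some M" "M + k \<le> N" by blast
        have "\<pi> (i + k) \<notin> accepting A" using m i(1) by simp
        then have "0 < M \<and> snd (X (Suc (i + k))) = Some (M - 1)"
          using XG[of "i + k"] M(1) unfolding Good_def \<pi>_def by blast
        then show ?case using M(2) by auto
      qed
      from this[of "Suc N"] show False by auto
    qed
    show "w \<in> language A" unfolding language_def using wO ptr p0 pinf by blast
  qed
  show ?thesis unfolding good_for_saturation_def SS_def[symmetric] using L1 L2 by blast
qed

end
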